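(* Let $\Omega\subset\mathbb{R}^3$ be a connected bounded open set with $C^2$ boundary and let $0<d<\min\{1,\delta\}$, where $\delta=\delta(\Omega)$ is as in the context. Then $\Omega\setminus\Omega_{d/8}$ is pathwise connected: for any $x'_1,x'_2\in\Omega\setminus\Omega_{d/8}$ there is a continuous curve in $\Omega\setminus\Omega_{d/8}$ joining $x'_1$ and $x'_2$.
   Context: $\Omega_\epsilon:=\{x\in\Omega:d(x,\partial\Omega)<\epsilon\}$. $\delta(\Omega)>0$ is a number such that for each $0<d<\min\{1,\delta\}$ there are $x_1^0,\dots,x_{m_1}^0\in\partial\Omega$ with $\partial\Omega\subset\bigcup_iB(x_i^0,d/8)$ and, for each $i$, an orthonormal basis $\{e_i^1,e_i^2,-n(x_i^0)\}$ ($n$ the outward unit normal) and a $C^2$ function $\phi_i:\mathbb{R}^2\to\mathbb{R}$, $\phi_i(0)=0$, $\nabla\phi_i(0)=0$, $|\nabla\phi_i|<\frac1{100}$, such that inside $B(x_i^0,3d)$ (open and closed) $\partial\Omega$ is the graph $\{x_i^0+u_1e_i^1+u_2e_i^2-\phi_i(u_1,u_2)n(x_i^0)\}$ and $\Omega$ is the region $u_3>\phi_i(u_1,u_2)$ in coordinates $x_i^0+u_1e_i^1+u_2e_i^2-u_3n(x_i^0)$, and $B(x_i^0-\frac d2n(x_i^0),\frac d2)\subset B(x_i^0,d)\cap\Omega$. *)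

theory Defs
  imports "HOL-Analysis.Analysis"
begin

definition C2_fun :: "('a::euclidean_space \<Rightarrow> real) \<Rightarrow> bool" where
  "C2_fun f \<longleftrightarrow> (\<exists>(f' :: 'a \<Rightarrow> 'a \<Rightarrow>\<^sub>L real) (f'' :: 'a \<Rightarrow> 'a \<Rightarrow>\<^sub>L ('a \<Rightarrow>\<^sub>L real)).
      (\<forall>x. (f has_derivative blinfun_apply (f' x)) (at x)) \<and>
      (\<forall>x. (f' has_derivative blinfun_apply (f'' x)) (at x)) \<and>
      continuous_on UNIV f'')"

definition chart :: "real^3 \<Rightarrow> real^3 \<Rightarrow> real^3 \<Rightarrow> real^3 \<Rightarrow> real \<Rightarrow> real \<Rightarrow> real \<Rightarrow> real^3" where
  "chart x0 e1 e2 \<nu> u1 u2 u3 = x0 + u1 *\<^sub>R e1 + u2 *\<^sub>R e2 - u3 *\<^sub>R \<nu>"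

definition graph_chart ::
  "(real^3) set \<Rightarrow> real^3 \<Rightarrow> (real^3) set \<Rightarrow> real^3 \<Rightarrow> real^3 \<Rightarrow> real^3 \<Rightarrow> (real \<times> real \<Rightarrow> real) \<Rightarrow> bool" where
  "graph_chart \<Omega> x0 S e1 e2 \<nu> \<phi> \<longleftrightarrow>
     norm e1 = 1 \<and> norm e2 = 1 \<and> norm \<nu> = 1 \<and>
     e1 \<bullet> e2 = 0 \<and> e1 \<bullet> \<nu> = 0 \<and> e2 \<bullet> \<nu> = 0 \<and>
     C2_fun \<phi> \<and> \<phi> (0, 0) = 0 \<and>
     frontier \<Omega> \<inter> S = {chart x0 e1 e2 \<nu> u1 u2 (\<phi> (u1, u2)) | u1 u2. True} \<inter> S \<and>
     \<Omega> \<inter> S = {chart x0 e1 e2 \<nu> u1 u2 u3 | u1 u2 u3. u3 > \<phi> (u1, u2)} \<inter> S"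

definition C2_boundary :: "(real^3) set \<Rightarrow> bool" where
  "C2_boundary \<Omega> \<longleftrightarrow> (\<forall>x\<in>frontier \<Omega>. \<exists>r>0. \<exists>e1 e2 \<nu> \<phi>. graph_chart \<Omega> x (ball x r) e1 e2 \<nu> \<phi>)"

text \<open>The number delta(\<Omega>) of the context. The vector nu plays the role of the outward unit
  normal n(x_i^0); it is forced to be it by the graph conditions together with grad phi(0) = 0.\<close>
definition delta_property :: "(real^3) set \<Rightarrow> real \<Rightarrow> bool" where
  "delta_property \<Omega> \<delta> \<longleftrightarrow> \<delta> > 0 \<and>
     (\<forall>d. 0 < d \<and> d < min 1 \<delta> \<longrightarrow>
        (\<exists>X. finite X \<and> X \<subseteq> frontier \<Omega> \<and> frontier \<Omega> \<subseteq> (\<Union>x\<in>X. ball x (d/8)) \<and>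
           (\<forall>x\<in>X. \<exists>e1 e2 \<nu> \<phi>.
               graph_chart \<Omega> x (ball x (3*d)) e1 e2 \<nu> \<phi> \<and>
               graph_chart \<Omega> x (cball x (3*d)) e1 e2 \<nu> \<phi> \<and>
               frechet_derivative \<phi> (at (0, 0)) = (\<lambda>_. 0) \<and>
               (\<forall>u. onorm (frechet_derivative \<phi> (at u)) < 1/100) \<and>
               ball (x - (d/2) *\<^sub>R \<nu>) (d/2) \<subseteq> ball x d \<inter> \<Omega>)))"

definition Omega_eps :: "(real^3) set \<Rightarrow> real \<Rightarrow> (real^3) set" where
  "Omega_eps \<Omega> \<epsilon> = {x\<in>\<Omega>. infdist x (frontier \<Omega>) < \<epsilon>}"

end

theory Submission
  imports Defs
begin

lemma basis3:
  fixes e1 e2 n v :: "real^3"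
  assumes "norm e1 = 1" "norm e2 = 1" "norm n = 1"
    "e1 \<bullet> e2 = 0" "e1 \<bullet> n = 0" "e2 \<bullet> n = 0"
  shows "v = (v \<bullet> e1) *\<^sub>R e1 + (v \<bullet> e2) *\<^sub>R e2 + (v \<bullet> n) *\<^sub>R n"
proof (rule ccontr)
  have u: "e1 \<bullet> e1 = 1" "e2 \<bullet> e2 = 1" "n \<bullet> n = 1" using assms(1-3) by (simp_all add: norm_eq_1)
  have c: "e2 \<bullet> e1 = 0" "n \<bullet> e1 = 0" "n \<bullet> e2 = 0" using assms(4-6) by (simp_all add: inner_commute)
  define w where "w = v - ((v \<bullet> e1) *\<^sub>R e1 + (v \<bullet> e2) *\<^sub>R e2 + (v \<bullet> n) *\<^sub>R n)"
  assume "v \<noteq> (v \<bullet> e1) *\<^sub>R e1 + (v \<bullet> e2) *\<^sub>R e2 + (v \<bullet> n) *\<^sub>R n"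
  hence w0: "w \<noteq> 0" unfolding w_def by simp
  have o: "w \<bullet> e1 = 0" "w \<bullet> e2 = 0" "w \<bullet> n = 0"
    unfolding w_def using u c assms(4-6) by (simp_all add: inner_diff_left inner_add_left)
  have o': "e1 \<bullet> w = 0" "e2 \<bullet> w = 0" "n \<bullet> w = 0" using o by (simp_all add: inner_commute)
  have d: "e1 \<noteq> e2" "e1 \<noteq> n" "e2 \<noteq> n" "w \<noteq> e1" "w \<noteq> e2" "w \<noteq> n"
    using u c assms(4-6) o by auto
  have nz: "e1 \<noteq> 0" "e2 \<noteq> 0" "n \<noteq> 0" using assms(1-3) by auto
  have "independent {e1, e2, n, w}"
    apply (rule pairwise_orthogonal_independent)
    using assms(4-6) c o o' w0 nz unfolding pairwise_def orthogonal_def by auto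
  hence "card {e1, e2, n, w} \<le> DIM(real^3)" using independent_bound by blast
  moreover have "card {e1, e2, n, w} = 4" using d by auto
  ultimately show False by simp
qed

lemma chart_H:
  fixes \<Omega> :: "(real^3) set"
  assumes gc: "graph_chart \<Omega> x0 (ball x0 \<rho>0) e1 e2 \<nu> \<phi>"
    and lip: "\<And>p q. norm (\<phi> p - \<phi> q) \<le> L * norm (p - q)" and L0: "L \<ge> 0"
    and Hdef: "H = (\<lambda>z. - ((z - x0) \<bullet> \<nu>) - \<phi> ((z - x0) \<bullet> e1, (z - x0) \<bullet> e2))"
  shows "z \<in> ball x0 \<rho>0 \<Longrightarrow> (z \<in> \<Omega> \<longleftrightarrow> H z > 0)"
    and "H (z - t *\<^sub>R \<nu>) = H z + t"
    and "H w \<ge> H z - (1 + 2*L) * dist z w"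
    and "0 \<le> s \<Longrightarrow> s \<le> 1 \<Longrightarrow> H ((1-s) *\<^sub>R a + s *\<^sub>R b) \<ge> (1-s) * H a + s * H b - L * dist a b"
proof -
  have n: "norm e1 = 1" "norm e2 = 1" "norm \<nu> = 1" "e1 \<bullet> e2 = 0" "e1 \<bullet> \<nu> = 0" "e2 \<bullet> \<nu> = 0"
    and om: "\<Omega> \<inter> ball x0 \<rho>0 = {chart x0 e1 e2 \<nu> u1 u2 u3 | u1 u2 u3. u3 > \<phi> (u1, u2)} \<inter> ball x0 \<rho>0"
    using gc unfolding graph_chart_def by simp_all
  have u: "e1 \<bullet> e1 = 1" "e2 \<bullet> e2 = 1" "\<nu> \<bullet> \<nu> = 1" using n(1-3) by (simp_all add: norm_eq_1)
  have c: "e2 \<bullet> e1 = 0" "\<nu> \<bullet> e1 = 0" "\<nu> \<bullet> e2 = 0" using n(4-6) by (simp_all add: inner_commute)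
  note ip = u c n(4-6)
  {
    assume zb: "z \<in> ball x0 \<rho>0"
    show "z \<in> \<Omega> \<longleftrightarrow> H z > 0"
    proof
      assume "z \<in> \<Omega>"
      with zb om obtain u1 u2 u3 where z: "z = chart x0 e1 e2 \<nu> u1 u2 u3" and g: "u3 > \<phi> (u1, u2)"
        by blast
      have "(z - x0) \<bullet> e1 = u1" "(z - x0) \<bullet> e2 = u2" "(z - x0) \<bullet> \<nu> = - u3"
        unfolding z chart_def using ip by (simp_all add: inner_diff_left inner_add_left)
      thus "H z > 0" using g unfolding Hdef by simp
    next
      assume h: "H z > 0"
      have "z - x0 = ((z - x0) \<bullet> e1) *\<^sub>R e1 + ((z - x0) \<bullet> e2) *\<^sub>R e2 + ((z - x0) \<bullet> \<nu>) *\<^sub>R \<nu>"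
        by (rule basis3[OF n])
      hence "z = chart x0 e1 e2 \<nu> ((z - x0) \<bullet> e1) ((z - x0) \<bullet> e2) (- ((z - x0) \<bullet> \<nu>))"
        unfolding chart_def by (simp add: algebra_simps)
      moreover have "- ((z - x0) \<bullet> \<nu>) > \<phi> ((z - x0) \<bullet> e1, (z - x0) \<bullet> e2)" using h unfolding Hdef by simp
      ultimately have "z \<in> {chart x0 e1 e2 \<nu> u1 u2 u3 | u1 u2 u3. u3 > \<phi> (u1, u2)} \<inter> ball x0 \<rho>0"
        using zb by blast
      thus "z \<in> \<Omega>" using om by blast
    qed
  }
  show "H (z - t *\<^sub>R \<nu>) = H z + t"
    unfolding Hdef using ip by (simp add: inner_diff_left)
  have cs: "\<bar>v \<bullet> e\<bar> \<le> norm v" if "norm e = 1" for v e :: "real^3"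
    using Cauchy_Schwarz_ineq2[of v e] that by simp
  have pd: "norm ((v \<bullet> e1, v \<bullet> e2) - (v' \<bullet> e1, v' \<bullet> e2)) \<le> 2 * norm (v - v')" for v v' :: "real^3"
  proof -
    have "norm ((v \<bullet> e1, v \<bullet> e2) - (v' \<bullet> e1, v' \<bullet> e2)) = norm ((v - v') \<bullet> e1, (v - v') \<bullet> e2)"
      by (simp add: inner_diff_left)
    also have "\<dots> \<le> norm ((v - v') \<bullet> e1) + norm ((v - v') \<bullet> e2)" by (rule norm_Pair_le)
    also have "\<dots> \<le> 2 * norm (v - v')" using cs[OF n(1), of "v - v'"] cs[OF n(2), of "v - v'"] by simp
    finally show ?thesis .
  qed
  show "H w \<ge> H z - (1 + 2*L) * dist z w"
  proof -
    have a: "\<bar>(w - x0) \<bullet> \<nu> - (z - x0) \<bullet> \<nu>\<bar> \<le> dist z w"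
      using cs[OF n(3), of "w - z"] by (simp add: inner_diff_left dist_norm norm_minus_commute)
    have b: "\<bar>\<phi> ((w - x0) \<bullet> e1, (w - x0) \<bullet> e2) - \<phi> ((z - x0) \<bullet> e1, (z - x0) \<bullet> e2)\<bar> \<le> L * (2 * dist z w)"
    proof -
      have "\<bar>\<phi> ((w - x0) \<bullet> e1, (w - x0) \<bullet> e2) - \<phi> ((z - x0) \<bullet> e1, (z - x0) \<bullet> e2)\<bar>
          \<le> L * norm (((w - x0) \<bullet> e1, (w - x0) \<bullet> e2) - ((z - x0) \<bullet> e1, (z - x0) \<bullet> e2))"
        using lip[of "((w - x0) \<bullet> e1, (w - x0) \<bullet> e2)" "((z - x0) \<bullet> e1, (z - x0) \<bullet> e2)"] by simp
      also have "\<dots> \<le> L * (2 * dist z w)"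
        using pd[of "w - x0" "z - x0"] L0 by (intro mult_left_mono) (auto simp: dist_norm norm_minus_commute)
      finally show ?thesis .
    qed
    show ?thesis unfolding Hdef using a b by (simp add: algebra_simps abs_le_iff)
  qed
  assume s: "0 \<le> s" "s \<le> 1"
  show "H ((1-s) *\<^sub>R a + s *\<^sub>R b) \<ge> (1-s) * H a + s * H b - L * dist a b"
  proof -
    define p where "p = ((a - x0) \<bullet> e1, (a - x0) \<bullet> e2)"
    define q where "q = ((b - x0) \<bullet> e1, (b - x0) \<bullet> e2)"
    define m where "m = (((1-s) *\<^sub>R a + s *\<^sub>R b - x0) \<bullet> e1, ((1-s) *\<^sub>R a + s *\<^sub>R b - x0) \<bullet> e2)"
    have ev: "(1-s) *\<^sub>R a + s *\<^sub>R b - x0 = (1-s) *\<^sub>R (a - x0) + s *\<^sub>R (b - x0)"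
      by (simp add: algebra_simps)
    have m: "m = (1-s) *\<^sub>R p + s *\<^sub>R q" unfolding m_def p_def q_def ev
      by (simp add: inner_add_left)
    have mp: "m - p = s *\<^sub>R (q - p)" unfolding m by (simp add: algebra_simps)
    have mq: "m - q = (1-s) *\<^sub>R (p - q)" unfolding m by (simp add: algebra_simps)
    have qp: "norm (q - p) \<le> 2 * dist a b"
      using pd[of "b - x0" "a - x0"] unfolding p_def q_def by (simp add: dist_norm norm_minus_commute)
    have f1: "\<phi> m \<le> \<phi> p + L * (s * norm (q - p))"
      using lip[of m p] s unfolding mp by (simp add: abs_le_iff)
    have f2: "\<phi> m \<le> \<phi> q + L * ((1-s) * norm (q - p))"
      using lip[of m q] s unfolding mq by (simp add: abs_le_iff norm_minus_commute)
    have "(1-s) * \<phi> m \<le> (1-s) * (\<phi> p + L * (s * norm (q - p)))"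
      using f1 s by (intro mult_left_mono) auto
    moreover have "s * \<phi> m \<le> s * (\<phi> q + L * ((1-s) * norm (q - p)))"
      using f2 s by (intro mult_left_mono) auto
    ultimately have f: "\<phi> m \<le> (1-s) * \<phi> p + s * \<phi> q + L * (2 * s * (1-s) * norm (q - p))"
      by (simp add: algebra_simps)
    have "2 * s * (1-s) * norm (q - p) \<le> (1/2) * norm (q - p)"
    proof -
      have "2 * s * (1-s) \<le> 1/2" 
      proof -
        have "0 \<le> (2 * s - 1)^2" by simp
        thus ?thesis by (simp add: power2_eq_square algebra_simps)
      qed
      thus ?thesis by (intro mult_right_mono) auto
    qed
    also have "\<dots> \<le> dist a b" using qp by simp
    finally have "L * (2 * s * (1-s) * norm (q - p)) \<le> L * dist a b" using L0 by (intro mult_left_mono) auto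
    with f have fm: "\<phi> m \<le> (1-s) * \<phi> p + s * \<phi> q + L * dist a b" by simp
    have lin: "((1-s) *\<^sub>R a + s *\<^sub>R b - x0) \<bullet> \<nu> = (1-s) * ((a - x0) \<bullet> \<nu>) + s * ((b - x0) \<bullet> \<nu>)"
      unfolding ev by (simp add: inner_add_left)
    show ?thesis unfolding Hdef using fm lin unfolding m_def[symmetric] p_def[symmetric] q_def[symmetric]
      by (simp add: algebra_simps)
  qed
qed


lemma phi_lip:
  fixes \<phi> :: "real \<times> real \<Rightarrow> real"
  assumes "C2_fun \<phi>" "\<forall>u. onorm (frechet_derivative \<phi> (at u)) < 1/100"
  shows "norm (\<phi> p - \<phi> q) \<le> (1/100) * norm (p - q)"
proof -
  obtain f' :: "(real \<times> real) \<Rightarrow> ((real \<times> real) \<Rightarrow>\<^sub>L real)" where d: "\<And>x. (\<phi> has_derivative blinfun_apply (f' x)) (at x)"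
    using assms(1) unfolding C2_fun_def by blast
  have d2: "(\<phi> has_derivative frechet_derivative \<phi> (at x)) (at x within UNIV)" for x
    using d[of x] frechet_derivative_at[OF d[of x]] by simp
  show ?thesis
    by (rule differentiable_bound[OF convex_UNIV d2]) (use assms(2) less_imp_le in auto)
qed

lemma K_char:
  fixes \<Omega> :: "(real^3) set"
  assumes "open \<Omega>" "frontier \<Omega> \<noteq> {}" "r > 0"
  shows "x \<in> \<Omega> - Omega_eps \<Omega> r \<longleftrightarrow> ball x r \<subseteq> \<Omega>"
proof
  assume x: "x \<in> \<Omega> - Omega_eps \<Omega> r"
  hence xo: "x \<in> \<Omega>" and ge: "\<not> infdist x (frontier \<Omega>) < r" unfolding Omega_eps_def by auto
  show "ball x r \<subseteq> \<Omega>"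
  proof
    fix y assume y: "y \<in> ball x r"
    show "y \<in> \<Omega>"
    proof (rule ccontr)
      assume "y \<notin> \<Omega>"
      hence "closed_segment x y \<inter> frontier \<Omega> \<noteq> {}"
        using xo by (intro connected_Int_frontier) auto
      then obtain p where p: "p \<in> closed_segment x y" "p \<in> frontier \<Omega>" by blast
      have "dist x p \<le> dist x y" using dist_in_closed_segment[OF p(1)] by (simp add: dist_commute)
      hence "infdist x (frontier \<Omega>) < r" using infdist_le[OF p(2), of x] y by simp
      with ge show False by simp
    qed
  qed
next
  assume b: "ball x r \<subseteq> \<Omega>"
  hence xo: "x \<in> \<Omega>" using assms(3) by auto
  have "r \<le> infdist x (frontier \<Omega>)"
    unfolding infdist_notempty[OF assms(2)]
  proof (rule cINF_greatest[OF assms(2)])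
    fix a assume a: "a \<in> frontier \<Omega>"
    hence "a \<notin> \<Omega>" using assms(1) by (simp add: frontier_def interior_open)
    thus "r \<le> dist x a" using b by (meson mem_ball not_le subsetD)
  qed
  thus "x \<in> \<Omega> - Omega_eps \<Omega> r" using xo unfolding Omega_eps_def by auto
qed


theorem lemma2p5:
  fixes \<Omega> :: "(real^3) set" and \<delta> d :: real
  assumes "open \<Omega>" and "connected \<Omega>" and "bounded \<Omega>"
    and "C2_boundary \<Omega>"
    and "delta_property \<Omega> \<delta>"
    and "0 < d" and "d < min 1 \<delta>"
  shows "path_connected (\<Omega> - Omega_eps \<Omega> (d/8))"
proof -
  define r where "r = d/8"
  have r0: "r > 0" using assms(6) unfolding r_def by simp
  define K where "K = \<Omega> - Omega_eps \<Omega> r"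
  show ?thesis
  proof (cases "frontier \<Omega> = {}")
    case True
    have "\<Omega> - Omega_eps \<Omega> (d/8) = {}" using assms(6) unfolding Omega_eps_def True by (auto simp: infdist_def)
    thus ?thesis by (simp only:) simp
  next
    case False
    have Kc: "x \<in> K \<longleftrightarrow> ball x r \<subseteq> \<Omega>" for x
      unfolding K_def by (rule K_char[OF assms(1) False r0])
    have KO: "K \<subseteq> \<Omega>" unfolding K_def by auto
    have LL: "\<exists>k0\<in>K. dist a k0 + r < 4*r \<and>
        (\<forall>k\<in>K. \<forall>k'\<in>K. dist a k < 5*r \<longrightarrow> dist a k' < 5*r \<longrightarrow> path_component K k k')"
      if aO: "a \<in> \<Omega>" for a
    proof (cases "ball a (6*r) \<subseteq> \<Omega>")
      case True
      have aK: "a \<in> K" unfolding Kc using True r0 by (auto simp: subset_iff)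
      have bK: "ball a (5*r) \<subseteq> K"
      proof
        fix z assume "z \<in> ball a (5*r)"
        hence "ball z r \<subseteq> ball a (6*r)"
        proof (intro subsetI)
          fix w assume "z \<in> ball a (5*r)" "w \<in> ball z r"
          moreover have "dist a w \<le> dist a z + dist z w" by (rule dist_triangle)
          ultimately show "w \<in> ball a (6*r)" by simp
        qed
        thus "z \<in> K" unfolding Kc using True by blast
      qed
      show ?thesis
      proof (intro bexI[OF _ aK] conjI ballI impI)
        show "dist a a + r < 4 * r" using r0 by simp
        fix k k' assume "dist a k < 5*r" "dist a k' < 5*r"
        hence "closed_segment k k' \<subseteq> ball a (5*r)" by (intro closed_segment_subset) auto
        thus "path_component K k k'" using bK by (intro path_component_linepath) auto
      qed
    next
      case False
      then obtain y where y: "y \<in> ball a (6*r)" "y \<notin> \<Omega>" by blast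
      hence "closed_segment a y \<inter> frontier \<Omega> \<noteq> {}"
        using aO by (intro connected_Int_frontier) auto
      then obtain p where p: "p \<in> closed_segment a y" "p \<in> frontier \<Omega>" by blast
      have ap: "dist a p < 6*r" using dist_in_closed_segment[OF p(1)] y(1) by (simp add: dist_commute)
      obtain X where X: "finite X" "X \<subseteq> frontier \<Omega>" "frontier \<Omega> \<subseteq> (\<Union>x\<in>X. ball x (d/8))"
        and XX: "\<forall>x\<in>X. \<exists>e1 e2 \<nu> \<phi>.
               graph_chart \<Omega> x (ball x (3*d)) e1 e2 \<nu> \<phi> \<and>
               graph_chart \<Omega> x (cball x (3*d)) e1 e2 \<nu> \<phi> \<and>
               frechet_derivative \<phi> (at (0, 0)) = (\<lambda>_. 0) \<and>
               (\<forall>u. onorm (frechet_derivative \<phi> (at u)) < 1/100) \<and>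
               ball (x - (d/2) *\<^sub>R \<nu>) (d/2) \<subseteq> ball x d \<inter> \<Omega>"
        using assms(5) assms(6,7) unfolding delta_property_def by (elim conjE allE[of _ d] impE) auto
      obtain x where x: "x \<in> X" "dist x p < r" using X(3) p(2) unfolding r_def by auto
      obtain e1 e2 \<nu> \<phi> where gc: "graph_chart \<Omega> x (ball x (3*d)) e1 e2 \<nu> \<phi>"
        and od: "\<forall>u. onorm (frechet_derivative \<phi> (at u)) < 1/100"
        using XX x(1) by blast
      have C2: "C2_fun \<phi>" and nn: "norm \<nu> = 1" using gc unfolding graph_chart_def by simp_all
      define H where "H = (\<lambda>z. - ((z - x) \<bullet> \<nu>) - \<phi> ((z - x) \<bullet> e1, (z - x) \<bullet> e2))"
      note lip = phi_lip[OF C2 od]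
      have L0: "(0::real) \<le> 1/100" by simp
      note F = chart_H[OF gc lip L0 H_def]
      have d24: "3*d = 24*r" unfolding r_def by simp
      have F1: "z \<in> \<Omega> \<longleftrightarrow> H z > 0" if "dist x z < 24*r" for z
        using F(1)[of z] that d24 by simp
      have F3: "H w \<ge> H z - (102/100) * dist z w" for z w using F(3)[where w=w and z=z] by simp
      have xa: "dist x a < 7*r" using x(2) ap dist_triangle[of x a p] by (simp add: dist_commute)
      have Hpos: "H z > 0" if "z \<in> K" "dist x z < 24*r" for z
        using that KO F1 by blast
      have KI: "z \<in> K" if "\<And>w. dist z w < r \<Longrightarrow> dist x w < 24*r \<and> H w > 0" for z
        unfolding Kc
      proof (intro subsetI)
        fix w assume "w \<in> ball z r"
        hence "dist x w < 24*r \<and> H w > 0" using that by simp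
        thus "w \<in> \<Omega>" using F1 by blast
      qed
      define c where "c = 2*r"
      have dnu: "dist z (z - t *\<^sub>R \<nu>) = \<bar>t\<bar>" for z t using nn by (simp add: dist_norm)
      have k0K: "a - c *\<^sub>R \<nu> \<in> K"
      proof (rule KI)
        fix w assume w: "dist (a - c *\<^sub>R \<nu>) w < r"
        have dd: "dist a (a - c *\<^sub>R \<nu>) = c" using dnu[of a c] r0 unfolding c_def by simp
        have "dist x w \<le> dist x a + dist a (a - c *\<^sub>R \<nu>) + dist (a - c *\<^sub>R \<nu>) w"
          by (meson dist_triangle add_mono order_trans order_refl)
        hence "dist x w < 24 * r" using xa w dd r0 unfolding c_def by linarith
        moreover have "H a > 0" using F1[of a] aO xa r0 by simp
        moreover have "H w \<ge> H (a - c *\<^sub>R \<nu>) - (102/100) * dist (a - c *\<^sub>R \<nu>) w" by (rule F3)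
        moreover have "H (a - c *\<^sub>R \<nu>) = H a + c" by (rule F(2))
        ultimately show "dist x w < 24*r \<and> H w > 0" using w r0 unfolding c_def by simp
      qed
      have vert: "path_component K k (k - c *\<^sub>R \<nu>)" if k: "k \<in> K" "dist a k < 5*r" for k
      proof (rule path_component_linepath, rule subsetI)
        fix z assume "z \<in> closed_segment k (k - c *\<^sub>R \<nu>)"
        then obtain u where u: "0 \<le> u" "u \<le> 1" "z = (1 - u) *\<^sub>R k + u *\<^sub>R (k - c *\<^sub>R \<nu>)"
          unfolding in_segment by auto
        define t where "t = u * c"
        have t: "0 \<le> t" "t \<le> c" using u r0 unfolding t_def c_def by (auto simp: mult_le_cancel_right1)
        have z: "z = k - t *\<^sub>R \<nu>" unfolding u(3) t_def by (simp add: algebra_simps)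
        show "z \<in> K"
        proof (rule KI)
          fix w assume w: "dist z w < r"
          have "dist k (w + t *\<^sub>R \<nu>) = dist z w" unfolding z by (simp add: dist_norm algebra_simps)
          hence wk: "w + t *\<^sub>R \<nu> \<in> ball k r" using w by simp
          hence "w + t *\<^sub>R \<nu> \<in> \<Omega>" using k(1) unfolding Kc by blast
          moreover have "dist x (w + t *\<^sub>R \<nu>) < 24 * r"
            using xa k(2) wk r0 dist_triangle[of x "w + t *\<^sub>R \<nu>" k] dist_triangle[of x k a]
            by (simp add: dist_commute)
          ultimately have h1: "H (w + t *\<^sub>R \<nu>) > 0" using F1 by blast
          have "H w = H (w + t *\<^sub>R \<nu>) + t" using F(2)[of "w + t *\<^sub>R \<nu>" t] by simp
          hence "H w > 0" using h1 t by simp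
          moreover have "dist x w < 24 * r"
          proof -
            have "dist x w \<le> dist x k + dist k z + dist z w"
              by (meson dist_triangle add_mono order_trans order_refl)
            moreover have "dist k z = t" using dnu[of k t] t unfolding z by simp
            moreover have "dist x k < 12 * r"
              using xa k(2) dist_triangle[of x k a] by (simp add: dist_commute)
            ultimately show ?thesis using w t unfolding c_def by simp
          qed
          ultimately show "dist x w < 24*r \<and> H w > 0" by simp
        qed
      qed
      have horiz: "path_component K (k - c *\<^sub>R \<nu>) (k' - c *\<^sub>R \<nu>)"
        if k: "k \<in> K" "dist a k < 5*r" and k': "k' \<in> K" "dist a k' < 5*r" for k k'
      proof (rule path_component_linepath, rule subsetI)
        let ?A = "k - c *\<^sub>R \<nu>" and ?B = "k' - c *\<^sub>R \<nu>"
        fix z assume zs: "z \<in> closed_segment ?A ?B"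
        then obtain u where u: "0 \<le> u" "u \<le> 1" "z = (1 - u) *\<^sub>R ?A + u *\<^sub>R ?B"
          unfolding in_segment by auto
        have xk: "dist x k < 12 * r" using xa k(2) dist_triangle[of x k a] by (simp add: dist_commute)
        have xk': "dist x k' < 12 * r" using xa k'(2) dist_triangle[of x k' a] by (simp add: dist_commute)
        have HA: "H ?A > c" using F(2)[of k c] Hpos[OF k(1)] xk r0 by simp
        have HB: "H ?B > c" using F(2)[of k' c] Hpos[OF k'(1)] xk' r0 by simp
        have AB: "dist ?A ?B < 10 * r"
        proof -
          have "dist ?A ?B = dist k k'" by (simp add: dist_norm algebra_simps)
          also have "\<dots> \<le> dist k a + dist a k'" by (rule dist_triangle)
          finally show ?thesis using k(2) k'(2) by (simp add: dist_commute)
        qed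
        have "(1 - u) * H ?A + u * H ?B \<ge> (1 - u) * c + u * c"
          using HA HB u by (intro add_mono mult_left_mono) auto
        hence "H z \<ge> c - (1/100) * dist ?A ?B" using F(4)[OF u(1,2), of ?A ?B] unfolding u(3)[symmetric]
          by (simp add: algebra_simps)
        hence Hz: "H z > 19/10 * r" using AB unfolding c_def by simp
        have xA: "dist x ?A < 14 * r" using xk dnu[of k c] r0 dist_triangle[of x ?A k] unfolding c_def by simp
        have xB: "dist x ?B < 14 * r" using xk' dnu[of k' c] r0 dist_triangle[of x ?B k'] unfolding c_def by simp
        have "closed_segment ?A ?B \<subseteq> ball x (14*r)" using xA xB by (intro closed_segment_subset) auto
        hence xz: "dist x z < 14 * r" using zs by auto
        show "z \<in> K"
        proof (rule KI)
          fix w assume w: "dist z w < r"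
          have "H w \<ge> H z - (102/100) * dist z w" by (rule F3)
          hence "H w > 0" using Hz w r0 by simp
          moreover have "dist x w < 24 * r" using xz w r0 dist_triangle[of x w z] by simp
          ultimately show "dist x w < 24*r \<and> H w > 0" by simp
        qed
      qed
      show ?thesis
      proof (intro bexI[OF _ k0K] conjI ballI impI)
        show "dist a (a - c *\<^sub>R \<nu>) + r < 4 * r" using dnu[of a c] r0 unfolding c_def by simp
        fix k k' assume kk: "k \<in> K" "k' \<in> K" "dist a k < 5*r" "dist a k' < 5*r"
        have "path_component K k (k - c *\<^sub>R \<nu>)" using vert kk by blast
        moreover have "path_component K (k - c *\<^sub>R \<nu>) (k' - c *\<^sub>R \<nu>)" using horiz kk by blast
        moreover have "path_component K (k' - c *\<^sub>R \<nu>) k'" using vert kk path_component_sym by blast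
        ultimately show "path_component K k k'" by (meson path_component_trans)
      qed
    qed
    have "path_connected K"
      unfolding path_connected_component
    proof (intro ballI)
      fix x1 x2 assume x1: "x1 \<in> K" and x2: "x2 \<in> K"
      let ?Q = "\<lambda>x. \<exists>k\<in>K. dist x k < 4*r \<and> path_component K x1 k"
      have "?Q x2"
      proof (rule connected_induction[OF assms(2), where P = "\<lambda>_. True" and Q = "?Q" and a = x1 and b = x2])
        show "x1 \<in> \<Omega>" "x2 \<in> \<Omega>" using x1 x2 KO by auto
        show "?Q x1" using x1 r0 path_component_refl[OF x1] by (intro bexI[of _ x1]) auto
        show "\<exists>z. z \<in> T \<and> True" if "a \<in> T" for T a using that by auto
        fix a assume aO: "a \<in> \<Omega>"
        obtain k0 where k0: "k0 \<in> K" "dist a k0 + r < 4*r"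
          and pc: "\<And>k k'. k \<in> K \<Longrightarrow> k' \<in> K \<Longrightarrow> dist a k < 5*r \<Longrightarrow> dist a k' < 5*r \<Longrightarrow> path_component K k k'"
          using LL[OF aO] by blast
        show "\<exists>T. openin (top_of_set \<Omega>) T \<and> a \<in> T \<and> (\<forall>x\<in>T. \<forall>y\<in>T. True \<and> True \<and> ?Q x \<longrightarrow> ?Q y)"
        proof (intro exI conjI ballI impI)
          show "openin (top_of_set \<Omega>) (\<Omega> \<inter> ball a r)" by (intro openin_open_Int) auto
          show "a \<in> \<Omega> \<inter> ball a r" using aO r0 by auto
          fix x y assume xT: "x \<in> \<Omega> \<inter> ball a r" and yT: "y \<in> \<Omega> \<inter> ball a r" and "True \<and> True \<and> ?Q x"
          then obtain k where k: "k \<in> K" "dist x k < 4*r" "path_component K x1 k" by blast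
          have "dist a k < 5*r" using k(2) xT dist_triangle[of a k x] by simp
          moreover have "dist a k0 < 5*r" using k0 r0 by simp
          ultimately have "path_component K k k0" using pc k(1) k0(1) by blast
          hence "path_component K x1 k0" using k(3) path_component_trans by blast
          moreover have "dist y k0 < 4*r" using yT k0 dist_triangle[of y k0 a] by (simp add: dist_commute)
          ultimately show "?Q y" using k0(1) by blast
        qed
      qed simp_all
      then obtain k where k: "k \<in> K" "dist x2 k < 4*r" "path_component K x1 k" by blast
      obtain k0 where pc: "\<And>k k'. k \<in> K \<Longrightarrow> k' \<in> K \<Longrightarrow> dist x2 k < 5*r \<Longrightarrow> dist x2 k' < 5*r \<Longrightarrow> path_component K k k'"
        using LL[of x2] x2 KO by blast
      have "path_component K k x2" using pc[OF k(1) x2] k(2) r0 by simp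
      thus "path_component K x1 x2" using k(3) path_component_trans by blast
    qed
    thus ?thesis unfolding K_def r_def .
  qed
qed

end
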